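(* Let $D=\sum_{m=-\infty}^{M}\sum_{k=-\infty}^{K}C_{km}x^k(d/dx)^m\in\Psi\mathfrak D$ with $C_{KM}\ne0$. Then $D$ is invertible in $\Psi\mathfrak D$.
   Context: $\Psi\mathfrak D$ is the algebra of all formal series $\sum_{m=-\infty}^{M}\sum_{k=-\infty}^{K}C_{km}x^k(d/dx)^m$ with $C_{km}\in\mathbb C$ and integers $M,K$ depending on the series, with multiplication determined by $(d/dx)^m x^k=\sum_{j\ge0}\frac{(m)_j(k)_j}{j!}x^{k-j}(d/dx)^{m-j}$ for $m,k\in\mathbb Z$, where $(a)_j=a(a-1)\cdots(a-j+1)$. *)

theory Defs
  imports Complex_Main "HOL-Library.Groups_Big_Fun"
begin

text \<open>An element sum_{k,m} C k m x^k (d/dx)^m of PsiD is represented by its coefficient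
  function C; membership in PsiD means the support is bounded above in both indices.\<close>

definition psd :: "(int \<Rightarrow> int \<Rightarrow> complex) \<Rightarrow> bool" where
  "psd C \<longleftrightarrow> (\<exists>K M. \<forall>k m. (k > K \<or> m > M) \<longrightarrow> C k m = 0)"

definition ffact_int :: "int \<Rightarrow> nat \<Rightarrow> int" where
  "ffact_int a j = (\<Prod>i<j. a - int i)"

text \<open>Product: x^k1 d^m1 * x^k2 d^m2 = sum_j (m1)_j (k2)_j / j! x^(k1+k2-j) d^(m1+m2-j).
  The coefficient of x^k d^m is a sum over (k1,m1,j) with k2 = k+j-k1, m2 = m+j-m1;
  for elements of PsiD only finitely many terms are nonzero.\<close>
definition psd_mult ::
  "(int \<Rightarrow> int \<Rightarrow> complex) \<Rightarrow> (int \<Rightarrow> int \<Rightarrow> complex) \<Rightarrow> int \<Rightarrow> int \<Rightarrow> complex" where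
  "psd_mult A B k m =
     Sum_any (\<lambda>(k1::int, m1::int, j::nat).
        A k1 m1 * B (k + int j - k1) (m + int j - m1) *
        of_int (ffact_int m1 j * ffact_int (k + int j - k1) j) / of_nat (fact j))"

definition psd_one :: "int \<Rightarrow> int \<Rightarrow> complex" where
  "psd_one k m = (if k = 0 \<and> m = 0 then 1 else 0)"

definition psd_invertible :: "(int \<Rightarrow> int \<Rightarrow> complex) \<Rightarrow> bool" where
  "psd_invertible D \<longleftrightarrow> (\<exists>E. psd E \<and> psd_mult D E = psd_one \<and> psd_mult E D = psd_one)"

end

theory Submission
  imports Defs "HOL-Computational_Algebra.Formal_Power_Series"
begin

abbreviation ff :: "int \<Rightarrow> nat \<Rightarrow> complex" where
  "ff x j \<equiv> of_int (ffact_int x j)"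

lemma ffact_Suc: "ffact_int a (Suc j) = ffact_int a j * (a - int j)"
  by (simp add: ffact_int_def)

lemma ffact_0[simp]: "ffact_int a 0 = 1"
  by (simp add: ffact_int_def)

lemma ffact_add: "ffact_int a (i + p) = ffact_int a i * ffact_int (a - int i) p"
  by (induction p) (simp_all add: ffact_Suc algebra_simps)

lemma ff_gchoose: "ff x j / fact j = (of_int x gchoose j)"
proof -
  have "fact j * (of_int x gchoose j) = (\<Prod>i = 0..<j. (of_int x :: complex) - of_nat i)"
    by (rule gbinomial_mult_fact)
  also have "\<dots> = ff x j"
    by (simp add: ffact_int_def atLeast0LessThan)
  finally show ?thesis by (simp add: field_simps)
qed

lemma vdm: "ff (x + y) n / fact n = (\<Sum>p\<le>n. (ff x p / fact p) * (ff y (n - p) / fact (n - p)))"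
  using gbinomial_Vandermonde[of "of_int x :: complex" "of_int y" n]
  by (simp add: ff_gchoose atLeast0AtMost)

definition wt :: "int \<Rightarrow> nat \<Rightarrow> int \<Rightarrow> complex" where
  "wt m j k = ff m j * ff k j / fact j"

lemma tri_sum: "(\<Sum>i\<le>n. \<Sum>p\<le>n - i. h i p) = (\<Sum>(i,p)\<in>{(i,p). i + p \<le> (n::nat)}. h i p)"
proof -
  have "{(i,p). i + p \<le> n} = Sigma {..n} (\<lambda>i. {..n - i})" by auto
  then show ?thesis by (simp add: sum.Sigma)
qed

lemma core:
  fixes b c e f :: int and n :: nat
  shows "(\<Sum>i\<le>n. wt b i c * wt (b + e - int i) (n - i) f)
       = (\<Sum>i\<le>n. wt e i f * wt b (n - i) (c + f - int i))"
proof -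
  define T where "T \<alpha> \<gamma> = ff b \<alpha> * ff c \<gamma> * ff e (n - \<alpha>) * ff f (n - \<gamma>)
      / (fact \<gamma> * fact (\<alpha> - \<gamma>) * fact (n - \<alpha>))" for \<alpha> \<gamma>
  have L: "wt b i c * wt (b + e - int i) (n - i) f = (\<Sum>p\<le>n - i. T (i + p) i)" if "i \<le> n" for i
  proof -
    have "wt (b + e - int i) (n - i) f = (ff ((b - int i) + e) (n - i) / fact (n - i)) * ff f (n - i)"
      by (simp add: wt_def algebra_simps)
    also have "\<dots> = (\<Sum>p\<le>n - i. (ff (b - int i) p / fact p) * (ff e (n - i - p) / fact (n - i - p))) * ff f (n - i)"
      by (simp only: vdm)
    finally have 1: "wt b i c * wt (b + e - int i) (n - i) f =
       (\<Sum>p\<le>n - i. (ff b i * ff c i / fact i) * ((ff (b - int i) p / fact p) * (ff e (n - i - p) / fact (n - i - p))) * ff f (n - i))"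
      by (simp add: wt_def sum_distrib_left sum_distrib_right mult.assoc)
    show ?thesis unfolding 1
    proof (rule sum.cong[OF refl])
      fix p assume "p \<in> {..n - i}"
      have "ff b (i + p) = ff b i * ff (b - int i) p" by (simp add: ffact_add)
      moreover have "n - (i + p) = n - i - p" by simp
      ultimately show "(ff b i * ff c i / fact i) * ((ff (b - int i) p / fact p) * (ff e (n - i - p) / fact (n - i - p))) * ff f (n - i) = T (i + p) i"
        by (simp add: T_def field_simps)
    qed
  qed
  have R: "wt e i f * wt b (n - i) (c + f - int i) = (\<Sum>p\<le>n - i. T (n - i) p)" if "i \<le> n" for i
  proof -
    have "wt b (n - i) (c + f - int i) = ff b (n - i) * (ff (c + (f - int i)) (n - i) / fact (n - i))"
      by (simp add: wt_def algebra_simps)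
    also have "\<dots> = ff b (n - i) * (\<Sum>p\<le>n - i. (ff c p / fact p) * (ff (f - int i) (n - i - p) / fact (n - i - p)))"
      by (simp only: vdm)
    finally have 1: "wt e i f * wt b (n - i) (c + f - int i) =
       (\<Sum>p\<le>n - i. (ff e i * ff f i / fact i) * ff b (n - i) * ((ff c p / fact p) * (ff (f - int i) (n - i - p) / fact (n - i - p))))"
      by (simp add: wt_def sum_distrib_left sum_distrib_right mult.assoc)
    show ?thesis unfolding 1
    proof (rule sum.cong[OF refl])
      fix p assume p: "p \<in> {..n - i}"
      have "ff f (i + (n - i - p)) = ff f i * ff (f - int i) (n - i - p)" by (simp add: ffact_add)
      moreover have "i + (n - i - p) = n - p" using p that by auto
      moreover have "n - (n - i) = i" using that by simp
      ultimately show "(ff e i * ff f i / fact i) * ff b (n - i) * ((ff c p / fact p) * (ff (f - int i) (n - i - p) / fact (n - i - p))) = T (n - i) p"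
        by (simp add: T_def field_simps)
    qed
  qed
  have "(\<Sum>i\<le>n. wt b i c * wt (b + e - int i) (n - i) f) = (\<Sum>i\<le>n. \<Sum>p\<le>n - i. T (i + p) i)"
    using L by (rule sum.cong[OF refl]) simp
  also have "\<dots> = (\<Sum>(i,p)\<in>{(i,p). i + p \<le> n}. T (i + p) i)" by (rule tri_sum)
  also have "\<dots> = (\<Sum>k\<le>n. \<Sum>i\<le>k. T (i + (k - i)) i)" by (rule sum.triangle_reindex_eq)
  also have "\<dots> = (\<Sum>k\<le>n. \<Sum>i\<le>k. T k i)" by (intro sum.cong) auto
  also have "\<dots> = (\<Sum>k\<in>{0..n}. \<Sum>i\<le>n + 0 - k. T (n + 0 - k) i)"
    by (subst sum.atLeastAtMost_rev) (simp add: atLeast0AtMost)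
  also have "\<dots> = (\<Sum>i\<le>n. \<Sum>p\<le>n - i. T (n - i) p)" by (simp add: atLeast0AtMost)
  also have "\<dots> = (\<Sum>i\<le>n. wt e i f * wt b (n - i) (c + f - int i))"
    using R by (intro sum.cong[OF refl]) simp
  finally show ?thesis .
qed

definition bnd :: "(int \<Rightarrow> int \<Rightarrow> complex) \<Rightarrow> int \<Rightarrow> int \<Rightarrow> bool" where
  "bnd A K M \<longleftrightarrow> (\<forall>k m. (k > K \<or> m > M) \<longrightarrow> A k m = 0)"

lemma bndD: "bnd A K M \<Longrightarrow> A k m \<noteq> 0 \<Longrightarrow> k \<le> K \<and> m \<le> M"
  unfolding bnd_def by force

lemma psd_bnd: "psd A \<Longrightarrow> \<exists>K M. bnd A K M"
  unfolding psd_def bnd_def by blast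

lemma bnd_psd: "bnd A K M \<Longrightarrow> psd A"
  unfolding psd_def bnd_def by blast

lemma psd_mult_alt: "psd_mult A B k m =
  (\<Sum>(k1,m1,j). A k1 m1 * B (k + int j - k1) (m + int j - m1) * wt m1 j (k + int j - k1))"
  unfolding psd_mult_def wt_def by (simp add: mult.assoc)

lemma fin_box3: "finite {(x::int,y::int,j::nat). lo1 \<le> x \<and> x \<le> hi1 \<and> lo2 \<le> y \<and> y \<le> hi2 \<and> int j \<le> N}"
  by (rule finite_subset[of _ "{lo1..hi1} \<times> {lo2..hi2} \<times> {..nat N}"]) auto

lemma fin_box4: "finite {(a::int,b::int,c::int,e::int). lo1 \<le> a \<and> a \<le> hi1 \<and> lo2 \<le> b \<and> b \<le> hi2
   \<and> lo3 \<le> c \<and> c \<le> hi3 \<and> lo4 \<le> e \<and> e \<le> hi4}"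
  by (rule finite_subset[of _ "{lo1..hi1} \<times> {lo2..hi2} \<times> {lo3..hi3} \<times> {lo4..hi4}"]) auto

lemma fin_box2: "finite {(i::nat,j::nat). int i + int j \<le> N}"
  by (rule finite_subset[of _ "{..nat N} \<times> {..nat N}"]) auto

lemma SA_cart:
  fixes g :: "'a \<Rightarrow> 'b \<Rightarrow> complex"
  assumes "finite P" "finite Q" "\<And>p q. g p q \<noteq> 0 \<Longrightarrow> p \<in> P \<and> q \<in> Q"
  shows "(\<Sum>p. Sum_any (g p)) = (\<Sum>(p,q). g p q)"
  by (rule Sum_any.cartesian_product[of "P \<times> Q"]) (use assms in auto)

lemma fin_summand:
  assumes A: "bnd A KA MA" and B: "bnd B KB MB"
  shows "finite {t. (\<lambda>(k1,m1,j). A k1 m1 * B (k + int j - k1) (m + int j - m1) * wt m1 j (k + int j - k1)) t \<noteq> 0}"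
proof (rule finite_subset[OF _ fin_box3[of "k - KB" KA "m - MB" MA "KA + KB - k"]], rule subsetI)
  fix t assume "t \<in> {t. (\<lambda>(k1,m1,j). A k1 m1 * B (k + int j - k1) (m + int j - m1) * wt m1 j (k + int j - k1)) t \<noteq> 0}"
  moreover obtain k1 m1 j where t: "t = (k1, m1, j)" by (cases t) auto
  ultimately have "A k1 m1 \<noteq> 0" "B (k + int j - k1) (m + int j - m1) \<noteq> 0" by auto
  with bndD[OF A] bndD[OF B] t show "t \<in> {(x::int,y::int,j::nat). k - KB \<le> x \<and> x \<le> KA \<and> m - MB \<le> y \<and> y \<le> MA \<and> int j \<le> KA + KB - k}"
    by fastforce
qed

lemma ffact_zero: "j > 0 \<Longrightarrow> ffact_int 0 j = 0"
  unfolding ffact_int_def by (auto simp: prod_zero_iff intro!: bexI[of _ 0])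

lemma SA_single: "(\<And>s. s \<noteq> t \<Longrightarrow> f s = 0) \<Longrightarrow> Sum_any f = (f t :: complex)"
  by (subst Sum_any.expand_superset[of "{t}"]) auto

lemma mult_one_right: "psd_mult A psd_one = A"
proof (intro ext)
  fix k m
  have "psd_mult A psd_one k m = (\<lambda>(k1,m1,j). A k1 m1 * psd_one (k + int j - k1) (m + int j - m1) * wt m1 j (k + int j - k1)) (k, m, 0)"
    unfolding psd_mult_alt
  proof (rule SA_single)
    fix s :: "int \<times> int \<times> nat" assume s: "s \<noteq> (k, m, 0)"
    obtain k1 m1 j where st: "s = (k1, m1, j)" by (cases s) auto
    show "(\<lambda>(k1,m1,j). A k1 m1 * psd_one (k + int j - k1) (m + int j - m1) * wt m1 j (k + int j - k1)) s = 0"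
    proof (cases "k + int j - k1 = 0 \<and> m + int j - m1 = 0")
      case True
      with s st have "j > 0" by auto
      with True show ?thesis by (simp add: st wt_def ffact_zero)
    qed (auto simp add: st psd_one_def)
  qed
  then show "psd_mult A psd_one k m = A k m" by (simp add: psd_one_def wt_def)
qed

lemma mult_one_left: "psd_mult psd_one B = B"
proof (intro ext)
  fix k m
  have "psd_mult psd_one B k m = (\<lambda>(k1,m1,j). psd_one k1 m1 * B (k + int j - k1) (m + int j - m1) * wt m1 j (k + int j - k1)) (0, 0, 0)"
    unfolding psd_mult_alt
  proof (rule SA_single)
    fix s :: "int \<times> int \<times> nat" assume s: "s \<noteq> (0, 0, 0)"
    obtain k1 m1 j where st: "s = (k1, m1, j)" by (cases s) auto
    show "(\<lambda>(k1,m1,j). psd_one k1 m1 * B (k + int j - k1) (m + int j - m1) * wt m1 j (k + int j - k1)) s = 0"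
    proof (cases "k1 = 0 \<and> m1 = 0")
      case True
      with s st have "j > 0" by auto
      with True show ?thesis by (simp add: st wt_def ffact_zero)
    qed (auto simp add: st psd_one_def)
  qed
  then show "psd_mult psd_one B k m = B k m" by (simp add: psd_one_def wt_def)
qed

definition tr :: "(int \<Rightarrow> int \<Rightarrow> complex) \<Rightarrow> int \<Rightarrow> int \<Rightarrow> complex" where
  "tr X k m = X m k"

lemma wt_sym: "wt a j c = wt c j a"
  by (simp add: wt_def mult.commute)

lemma transp: "psd_mult A B k m = psd_mult (tr B) (tr A) m k"
  unfolding psd_mult_alt
proof (rule sym, rule Sum_any.reindex_cong[where l="\<lambda>(k1,m1,j). (m + int j - m1, k + int j - k1, j)"])
  let ?l = "\<lambda>(k1,m1,j). (m + int j - m1, k + int j - k1, j)"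
  let ?l' = "\<lambda>(p,q,j). (k + int j - q, m + int j - p, j)"
  show "bij ?l"
    by (rule o_bij[where g="?l'"]) (auto simp: fun_eq_iff)
  show "(\<lambda>(k1, m1, j). tr B k1 m1 * tr A (m + int j - k1) (k + int j - m1) * wt m1 j (m + int j - k1)) \<circ> ?l =
    (\<lambda>(k1, m1, j). A k1 m1 * B (k + int j - k1) (m + int j - m1) * wt m1 j (k + int j - k1))"
    by (auto simp: fun_eq_iff tr_def wt_sym mult_ac)
qed

lemma SA_diag:
  fixes g :: "nat \<times> nat \<Rightarrow> complex"
  assumes "\<And>i j. g (i, j) \<noteq> 0 \<Longrightarrow> i + j \<le> N"
  shows "Sum_any g = Sum_any (\<lambda>n. \<Sum>i\<le>n. g (i, n - i))"
proof -
  have "Sum_any g = sum g {(i,j). i + j \<le> N}"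
  proof (rule Sum_any.expand_superset)
    show "finite {(i, j). i + j \<le> N}"
      by (rule finite_subset[of _ "{..N} \<times> {..N}"]) auto
    show "{a. g a \<noteq> 0} \<subseteq> {(i, j). i + j \<le> N}" using assms by auto
  qed
  also have "\<dots> = (\<Sum>(i,j)\<in>{(i,j). i + j \<le> N}. g (i, j))" by (simp add: case_prod_beta)
  also have "\<dots> = (\<Sum>n\<le>N. \<Sum>i\<le>n. g (i, n - i))" by (rule sum.triangle_reindex_eq)
  also have "\<dots> = Sum_any (\<lambda>n. \<Sum>i\<le>n. g (i, n - i))"
  proof (rule sym, rule Sum_any.expand_superset)
    show "{a. (\<Sum>i\<le>a. g (i, a - i)) \<noteq> 0} \<subseteq> {..N}"
    proof
      fix n assume "n \<in> {a. (\<Sum>i\<le>a. g (i, a - i)) \<noteq> 0}"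
      then obtain i where "i \<le> n" "g (i, n - i) \<noteq> 0" by (auto elim: sum.not_neutral_contains_not_neutral)
      then show "n \<in> {..N}" using assms by fastforce
    qed
  qed simp
  finally show ?thesis .
qed

lemma SA_zero: "(\<And>t. f t = 0) \<Longrightarrow> Sum_any f = (0::complex)"
proof -
  assume "\<And>t. f t = 0"
  then have "f = (\<lambda>_. 0)" by auto
  then show ?thesis by simp
qed

lemma right_inv:
  assumes Cb: "bnd C K M" and C0: "C K M \<noteq> 0"
  shows "\<exists>E. psd E \<and> psd_mult C E = psd_one"
proof -
  define R :: "((int \<times> int) \<times> (int \<times> int)) set" where
    "R = {((a',b'),(a,b)). a \<le> a' \<and> b \<le> b' \<and> (a',b') \<noteq> (a,b) \<and> a' \<le> -K \<and> b' \<le> -M}"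
  have wfR: "wf R"
  proof (rule wf_subset[OF wf_measure[of "\<lambda>(a,b). nat (-K - a - M - b)"]])
    show "R \<subseteq> measure (\<lambda>(a,b). nat (-K - a - M - b))"
      unfolding R_def by auto
  qed
  define S where "S g a b = Sum_any (\<lambda>(k1,m1,j). if (k1,m1,j) = (K,M,0::nat) then 0 else
      C k1 m1 * (if ((a + K + int j - k1, b + M + int j - m1),(a,b)) \<in> R then g (a + K + int j - k1, b + M + int j - m1) else 0)
        * wt m1 j (a + K + int j - k1))" for g a b
  define Fn where "Fn g ab = (case ab of (a,b) \<Rightarrow>
      if a > -K \<or> b > -M then 0 else (psd_one (a + K) (b + M) - S g a b) / C K M)" for g :: "int \<times> int \<Rightarrow> complex" and ab
  define E where "E a b = wfrec R Fn (a,b)" for a b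
  have Eeq: "E a b = (if a > -K \<or> b > -M then 0 else (psd_one (a + K) (b + M) - S (\<lambda>(a,b). E a b) a b) / C K M)" for a b
  proof -
    have "E a b = Fn (cut (wfrec R Fn) R (a,b)) (a,b)" unfolding E_def by (rule wfrec[OF wfR])
    also have "S (cut (wfrec R Fn) R (a,b)) a b = S (\<lambda>(a,b). E a b) a b"
      unfolding S_def by (rule Sum_any.cong) (auto simp: cut_apply E_def)
    ultimately show ?thesis by (simp add: Fn_def)
  qed
  have Eout: "E a b = 0" if "a > -K \<or> b > -M" for a b
    using Eeq[of a b] that by simp
  have Eb: "bnd E (-K) (-M)" unfolding bnd_def using Eout by blast
  have "psd_mult C E k m = psd_one k m" for k m
  proof (cases "k > 0 \<or> m > 0")
    case True
    show ?thesis unfolding psd_mult_alt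
    proof -
      have "(\<lambda>(k1,m1,j). C k1 m1 * E (k + int j - k1) (m + int j - m1) * wt m1 j (k + int j - k1)) t = 0" for t
      proof -
        obtain k1 m1 j where t: "t = (k1,m1,j)" by (cases t) auto
        show ?thesis
        proof (rule ccontr)
          assume "\<not> ?thesis"
          then have "C k1 m1 \<noteq> 0" "E (k + int j - k1) (m + int j - m1) \<noteq> 0" by (auto simp: t)
          with bndD[OF Cb] bndD[OF Eb] True show False by fastforce
        qed
      qed
      then have "Sum_any (\<lambda>(k1,m1,j). C k1 m1 * E (k + int j - k1) (m + int j - m1) * wt m1 j (k + int j - k1)) = 0"
        by (rule SA_zero)
      moreover have "psd_one k m = 0" using True by (auto simp add: psd_one_def)
      ultimately show "Sum_any (\<lambda>(k1,m1,j). C k1 m1 * E (k + int j - k1) (m + int j - m1) * wt m1 j (k + int j - k1)) = psd_one k m"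
        by simp
    qed
  next
    case False
    let ?f = "\<lambda>(k1,m1,j). C k1 m1 * E (k + int j - k1) (m + int j - m1) * wt m1 j (k + int j - k1)"
    let ?t0 = "(K, M, 0::nat)"
    let ?g = "?f(?t0 := 0)"
    have finf: "finite {t. ?f t \<noteq> 0}" by (rule fin_summand[OF Cb Eb])
    have fing: "finite {t. ?g t \<noteq> 0}" by (rule finite_subset[OF _ finf]) auto
    have "Sum_any ?f = Sum_any (?g(?t0 := ?f ?t0))" by (simp only: fun_upd_upd fun_upd_triv)
    also have "\<dots> = ?f ?t0 + Sum_any ?g" by (rule Sum_any.update[OF fing]) simp
    also have "?f ?t0 = C K M * E (k - K) (m - M)" by (simp add: wt_def)
    also have "Sum_any ?g = S (\<lambda>(a,b). E a b) (k - K) (m - M)"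
      unfolding S_def
    proof (rule Sum_any.cong)
      fix t :: "int \<times> int \<times> nat"
      obtain k1 m1 j where t: "t = (k1,m1,j)" by (cases t) auto
      show "?g t = (\<lambda>(k1,m1,j). if (k1,m1,j) = (K,M,0::nat) then 0 else
      C k1 m1 * (if ((k - K + K + int j - k1, m - M + M + int j - m1),(k - K, m - M)) \<in> R then (\<lambda>(a,b). E a b) (k - K + K + int j - k1, m - M + M + int j - m1) else 0)
        * wt m1 j (k - K + K + int j - k1)) t"
      proof (cases "t = ?t0")
        case True then show ?thesis by simp
      next
        case ne: False
        have ne': "\<not> (k1 = K \<and> m1 = M \<and> j = 0)" using ne t by auto
        show ?thesis
        proof (cases "((k + int j - k1, m + int j - m1),(k - K, m - M)) \<in> R")
          case True then show ?thesis using ne' by (auto simp add: t)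
        next
          case nR: False
          have "C k1 m1 * E (k + int j - k1) (m + int j - m1) = 0"
          proof (rule ccontr)
            assume "\<not> ?thesis"
            then have "C k1 m1 \<noteq> 0" "E (k + int j - k1) (m + int j - m1) \<noteq> 0" by auto
            with bndD[OF Cb] bndD[OF Eb] have h: "k1 \<le> K" "m1 \<le> M" "k + int j - k1 \<le> -K" "m + int j - m1 \<le> -M"
              by fastforce+
            have "(k + int j - k1, m + int j - m1) \<noteq> (k - K, m - M)"
            proof
              assume "(k + int j - k1, m + int j - m1) = (k - K, m - M)"
              with h have "j = 0" "k1 = K" "m1 = M" by auto
              with ne t show False by simp
            qed
            with h nR show False unfolding R_def by auto
          qed
          then show ?thesis using ne' nR by (auto simp add: t)
        qed
      qed
    qed
    also have "C K M * E (k - K) (m - M) + S (\<lambda>(a,b). E a b) (k - K) (m - M) = psd_one k m"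
      using Eeq[of "k - K" "m - M"] False C0 by (simp add: field_simps)
    finally show ?thesis unfolding psd_mult_alt .
  qed
  then show ?thesis using bnd_psd[OF Eb] by blast
qed

lemma assoc:
  assumes Ab: "bnd A KA MA" and Bb: "bnd B KB MB" and Cb: "bnd C KC MC"
  shows "psd_mult (psd_mult A B) C k m = psd_mult A (psd_mult B C) k m"
proof -
  define FL where "FL u v = (case u of (a,b,c,e) \<Rightarrow> case v of (i,j) \<Rightarrow>
     A a b * B c e * C (k + int i + int j - a - c) (m + int i + int j - b - e)
      * (wt b i c * wt (b + e - int i) j (k + int i + int j - a - c)))" for u :: "int \<times> int \<times> int \<times> int" and v :: "nat \<times> nat"
  define FR where "FR u v = (case u of (a,b,c,e) \<Rightarrow> case v of (i,j) \<Rightarrow>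
     A a b * B c e * C (k + int i + int j - a - c) (m + int i + int j - b - e)
      * (wt e i (k + int i + int j - a - c) * wt b j (k + int j - a)))" for u :: "int \<times> int \<times> int \<times> int" and v :: "nat \<times> nat"
  define GL where "GL p q = (case p of (k1,m1,j) \<Rightarrow> case q of (a,b,i) \<Rightarrow>
     (A a b * B (k1 + int i - a) (m1 + int i - b) * wt b i (k1 + int i - a))
      * (C (k + int j - k1) (m + int j - m1) * wt m1 j (k + int j - k1)))" for p q :: "int \<times> int \<times> nat"
  define GR where "GR p q = (case p of (a,b,j) \<Rightarrow> case q of (c,e,i) \<Rightarrow>
     (B c e * C (k + int j - a + int i - c) (m + int j - b + int i - e) * wt e i (k + int j - a + int i - c))
      * (A a b * wt b j (k + int j - a)))" for p q :: "int \<times> int \<times> nat"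
  define U where "U = {(a::int,b::int,c::int,e::int). k - KB - KC \<le> a \<and> a \<le> KA \<and> m - MB - MC \<le> b \<and> b \<le> MA
   \<and> k - KA - KC \<le> c \<and> c \<le> KB \<and> m - MA - MC \<le> e \<and> e \<le> MB}"
  define V where "V = {(i::nat,j::nat). int i + int j \<le> KA + KB + KC - k}"
  have finU: "finite U" unfolding U_def by (rule fin_box4)
  have finV: "finite V" unfolding V_def by (rule fin_box2)
  have suppX: "u \<in> U \<and> v \<in> V" if "A a b * B c e * C (k + int i + int j - a - c) (m + int i + int j - b - e) \<noteq> 0"
      and "u = (a,b,c,e)" "v = (i,j)" for u v a b c e i j
  proof -
    from that(1) have "A a b \<noteq> 0" "B c e \<noteq> 0" "C (k + int i + int j - a - c) (m + int i + int j - b - e) \<noteq> 0" by auto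
    with bndD[OF Ab] bndD[OF Bb] bndD[OF Cb] have h: "a \<le> KA" "b \<le> MA" "c \<le> KB" "e \<le> MB"
      "k + int i + int j - a - c \<le> KC" "m + int i + int j - b - e \<le> MC" by blast+
    then show ?thesis unfolding U_def V_def that(2,3) by simp
  qed
  have suppFL: "u \<in> U \<and> v \<in> V" if "FL u v \<noteq> 0" for u v
  proof -
    obtain a b c e where u: "u = (a,b,c,e)" by (cases u) auto
    obtain i j where v: "v = (i,j)" by (cases v) auto
    from that have "A a b * B c e * C (k + int i + int j - a - c) (m + int i + int j - b - e) \<noteq> 0"
      by (auto simp: FL_def u v)
    then show ?thesis using suppX u v by blast
  qed
  have suppFR: "u \<in> U \<and> v \<in> V" if "FR u v \<noteq> 0" for u v
  proof -
    obtain a b c e where u: "u = (a,b,c,e)" by (cases u) auto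
    obtain i j where v: "v = (i,j)" by (cases v) auto
    from that have "A a b * B c e * C (k + int i + int j - a - c) (m + int i + int j - b - e) \<noteq> 0"
      by (auto simp: FR_def u v)
    then show ?thesis using suppX u v by blast
  qed
  have inner: "Sum_any (FL u) = Sum_any (FR u)" for u
  proof -
    obtain a b c e where u: "u = (a,b,c,e)" by (cases u) auto
    define N where "N = nat (KA + KB + KC - k)"
    have bN: "i + j \<le> N" if "v \<in> V" "v = (i,j)" for v i j
      using that unfolding V_def N_def by auto
    define X where "X n = A a b * B c e * C (k + int n - a - c) (m + int n - b - e)" for n :: nat
    have "Sum_any (FL u) = Sum_any (\<lambda>n. \<Sum>i\<le>n. FL u (i, n - i))"
    proof (rule SA_diag)
      fix i j assume "FL u (i, j) \<noteq> 0"
      then have "(i,j) \<in> V" using suppFL by blast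
      then show "i + j \<le> N" using bN by blast
    qed
    also have "\<dots> = Sum_any (\<lambda>n. \<Sum>i\<le>n. FR u (i, n - i))"
    proof (rule Sum_any.cong)
      fix n :: nat
      have "(\<Sum>i\<le>n. FL u (i, n - i)) = X n * (\<Sum>i\<le>n. wt b i c * wt (b + e - int i) (n - i) (k + int n - a - c))"
        unfolding sum_distrib_left
      proof (rule sum.cong[OF refl])
        fix i assume "i \<in> {..n}"
        then have "int i + int (n - i) = int n" by auto
        then have e1: "k + int i + int (n - i) - a - c = k + int n - a - c"
          and e2: "m + int i + int (n - i) - b - e = m + int n - b - e" by linarith+
        show "FL u (i, n - i) = X n * (wt b i c * wt (b + e - int i) (n - i) (k + int n - a - c))"
          by (simp only: FL_def u X_def prod.case e1 e2)
      qed
      also have "\<dots> = X n * (\<Sum>i\<le>n. wt e i (k + int n - a - c) * wt b (n - i) (c + (k + int n - a - c) - int i))"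
        by (simp only: core)
      also have "\<dots> = (\<Sum>i\<le>n. FR u (i, n - i))"
        unfolding sum_distrib_left
      proof (rule sum.cong[OF refl])
        fix i assume "i \<in> {..n}"
        then have h: "int i + int (n - i) = int n" by auto
        have e3: "c + (k + int n - a - c) - int i = k + int (n - i) - a" using h by linarith
        have e1: "k + int i + int (n - i) - a - c = k + int n - a - c"
          and e2: "m + int i + int (n - i) - b - e = m + int n - b - e" using h by linarith+
        show "X n * (wt e i (k + int n - a - c) * wt b (n - i) (c + (k + int n - a - c) - int i)) = FR u (i, n - i)"
          by (simp only: FR_def u X_def prod.case e1 e2 e3)
      qed
      finally show "(\<Sum>i\<le>n. FL u (i, n - i)) = (\<Sum>i\<le>n. FR u (i, n - i))" .
    qed
    also have "\<dots> = Sum_any (FR u)"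
    proof (rule SA_diag[symmetric])
      fix i j assume "FR u (i, j) \<noteq> 0"
      then have "(i,j) \<in> V" using suppFR by blast
      then show "i + j \<le> N" using bN by blast
    qed
    finally show ?thesis .
  qed
  have "psd_mult (psd_mult A B) C k m = Sum_any (\<lambda>(k1,m1,j). psd_mult A B k1 m1 * (C (k + int j - k1) (m + int j - m1) * wt m1 j (k + int j - k1)))"
    unfolding psd_mult_alt[of "psd_mult A B" C k m] by (simp only: mult.assoc)
  also have "\<dots> = Sum_any (\<lambda>p. Sum_any (GL p))"
  proof (rule Sum_any.cong)
    fix p :: "int \<times> int \<times> nat"
    obtain k1 m1 j where p: "p = (k1,m1,j)" by (cases p) auto
    have "psd_mult A B k1 m1 * (C (k + int j - k1) (m + int j - m1) * wt m1 j (k + int j - k1))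
      = Sum_any (\<lambda>q. (\<lambda>(a,b,i). A a b * B (k1 + int i - a) (m1 + int i - b) * wt b i (k1 + int i - a)) q
          * (C (k + int j - k1) (m + int j - m1) * wt m1 j (k + int j - k1)))"
      unfolding psd_mult_alt[of A B k1 m1] by (rule Sum_any_left_distrib[OF fin_summand[OF Ab Bb]])
    also have "\<dots> = Sum_any (GL p)" by (rule Sum_any.cong) (auto simp: GL_def p split: prod.splits)
    finally show "(\<lambda>(k1,m1,j). psd_mult A B k1 m1 * (C (k + int j - k1) (m + int j - m1) * wt m1 j (k + int j - k1))) p = Sum_any (GL p)"
      by (simp add: p)
  qed
  also have "\<dots> = Sum_any (\<lambda>(p,q). GL p q)"
  proof (rule SA_cart)
    show "finite {(k1::int,m1::int,j::nat). k - KC \<le> k1 \<and> k1 \<le> KA + KB \<and> m - MC \<le> m1 \<and> m1 \<le> MA + MB \<and> int j \<le> KA + KB + KC - k}"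
      by (rule fin_box3)
    show "finite {(a::int,b::int,i::nat). k - KB - KC \<le> a \<and> a \<le> KA \<and> m - MB - MC \<le> b \<and> b \<le> MA \<and> int i \<le> KA + KB + KC - k}"
      by (rule fin_box3)
    fix p q assume nz: "GL p q \<noteq> 0"
    obtain k1 m1 j where p: "p = (k1,m1,j)" by (cases p) auto
    obtain a b i where q: "q = (a,b,i)" by (cases q) auto
    from nz have "A a b \<noteq> 0" "B (k1 + int i - a) (m1 + int i - b) \<noteq> 0" "C (k + int j - k1) (m + int j - m1) \<noteq> 0"
      by (auto simp: GL_def p q)
    with bndD[OF Ab] bndD[OF Bb] bndD[OF Cb] have h: "a \<le> KA" "b \<le> MA" "k1 + int i - a \<le> KB" "m1 + int i - b \<le> MB"
      "k + int j - k1 \<le> KC" "m + int j - m1 \<le> MC" by blast+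
    then show "p \<in> {(k1::int,m1::int,j::nat). k - KC \<le> k1 \<and> k1 \<le> KA + KB \<and> m - MC \<le> m1 \<and> m1 \<le> MA + MB \<and> int j \<le> KA + KB + KC - k}
       \<and> q \<in> {(a::int,b::int,i::nat). k - KB - KC \<le> a \<and> a \<le> KA \<and> m - MB - MC \<le> b \<and> b \<le> MA \<and> int i \<le> KA + KB + KC - k}"
      unfolding p q by simp
  qed
  also have "\<dots> = Sum_any (\<lambda>(u,v). FL u v)"
  proof (rule sym, rule Sum_any.reindex_cong[where l="\<lambda>(p,q). case p of (k1,m1,j) \<Rightarrow> case q of (a,b,i) \<Rightarrow> ((a,b,k1 + int i - a, m1 + int i - b),(i,j))"])
    let ?l = "\<lambda>(p,q). case p of (k1,m1,j) \<Rightarrow> case q of (a,b,i) \<Rightarrow> ((a::int,b::int,k1 + int i - a, m1 + int i - b),(i,j::nat))"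
    let ?l' = "\<lambda>(u,v). case u of (a,b,c,e) \<Rightarrow> case v of (i,j) \<Rightarrow> ((a + c - int i, b + e - int i, j::nat),(a::int,b::int,i::nat))"
    show "bij ?l"
      by (rule o_bij[where g="?l'"]) (auto simp: fun_eq_iff)
    show "(\<lambda>(u,v). FL u v) \<circ> ?l = (\<lambda>(p,q). GL p q)"
    proof (rule ext)
      fix x :: "(int \<times> int \<times> nat) \<times> (int \<times> int \<times> nat)"
      obtain k1 m1 j a b i where x: "x = ((k1,m1,j),(a,b,i))" by (cases x) auto
      have e1: "k + int i + int j - a - (k1 + int i - a) = k + int j - k1"
        and e2: "m + int i + int j - b - (m1 + int i - b) = m + int j - m1"
        and e3: "b + (m1 + int i - b) - int i = m1" by simp_all
      show "((\<lambda>(u,v). FL u v) \<circ> ?l) x = (\<lambda>(p,q). GL p q) x"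
        by (simp only: x comp_def prod.case FL_def GL_def e1 e2 e3 mult_ac)
    qed
  qed
  also have "\<dots> = Sum_any (\<lambda>u. Sum_any (FL u))"
    by (rule SA_cart[symmetric, OF finU finV suppFL])
  also have "\<dots> = Sum_any (\<lambda>u. Sum_any (FR u))"
    using inner by simp
  also have "\<dots> = Sum_any (\<lambda>(u,v). FR u v)"
    by (rule SA_cart[OF finU finV suppFR])
  also have "\<dots> = Sum_any (\<lambda>(p,q). GR p q)"
  proof (rule Sum_any.reindex_cong[where l="\<lambda>(p,q). case p of (a,b,j) \<Rightarrow> case q of (c,e,i) \<Rightarrow> ((a,b,c,e),(i,j))"])
    let ?l = "\<lambda>(p,q). case p of (a,b,j) \<Rightarrow> case q of (c,e,i) \<Rightarrow> ((a::int,b::int,c::int,e::int),(i::nat,j::nat))"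
    let ?l' = "\<lambda>(u,v). case u of (a,b,c,e) \<Rightarrow> case v of (i,j) \<Rightarrow> ((a::int,b::int,j::nat),(c::int,e::int,i::nat))"
    show "bij ?l"
      by (rule o_bij[where g="?l'"]) (auto simp: fun_eq_iff)
    show "(\<lambda>(u,v). FR u v) \<circ> ?l = (\<lambda>(p,q). GR p q)"
    proof (rule ext)
      fix x :: "(int \<times> int \<times> nat) \<times> (int \<times> int \<times> nat)"
      obtain a b j c e i where x: "x = ((a,b,j),(c,e,i))" by (cases x) auto
      have e1: "k + int i + int j - a - c = k + int j - a + int i - c"
        and e2: "m + int i + int j - b - e = m + int j - b + int i - e" by simp_all
      show "((\<lambda>(u,v). FR u v) \<circ> ?l) x = (\<lambda>(p,q). GR p q) x"
        by (simp only: x comp_def prod.case FR_def GR_def e1 e2 mult_ac)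
    qed
  qed
  also have "\<dots> = Sum_any (\<lambda>p. Sum_any (GR p))"
  proof (rule SA_cart[symmetric])
    show "finite {(a::int,b::int,j::nat). k - KB - KC \<le> a \<and> a \<le> KA \<and> m - MB - MC \<le> b \<and> b \<le> MA \<and> int j \<le> KA + KB + KC - k}"
      by (rule fin_box3)
    show "finite {(c::int,e::int,i::nat). k - KA - KC \<le> c \<and> c \<le> KB \<and> m - MA - MC \<le> e \<and> e \<le> MB \<and> int i \<le> KA + KB + KC - k}"
      by (rule fin_box3)
    fix p q assume nz: "GR p q \<noteq> 0"
    obtain a b j where p: "p = (a,b,j)" by (cases p) auto
    obtain c e i where q: "q = (c,e,i)" by (cases q) auto
    from nz have "A a b \<noteq> 0" "B c e \<noteq> 0" "C (k + int j - a + int i - c) (m + int j - b + int i - e) \<noteq> 0"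
      by (auto simp: GR_def p q)
    with bndD[OF Ab] bndD[OF Bb] bndD[OF Cb] have h: "a \<le> KA" "b \<le> MA" "c \<le> KB" "e \<le> MB"
      "k + int j - a + int i - c \<le> KC" "m + int j - b + int i - e \<le> MC" by blast+
    then show "p \<in> {(a::int,b::int,j::nat). k - KB - KC \<le> a \<and> a \<le> KA \<and> m - MB - MC \<le> b \<and> b \<le> MA \<and> int j \<le> KA + KB + KC - k}
       \<and> q \<in> {(c::int,e::int,i::nat). k - KA - KC \<le> c \<and> c \<le> KB \<and> m - MA - MC \<le> e \<and> e \<le> MB \<and> int i \<le> KA + KB + KC - k}"
      unfolding p q by simp
  qed
  also have "\<dots> = Sum_any (\<lambda>(a,b,j). A a b * psd_mult B C (k + int j - a) (m + int j - b) * wt b j (k + int j - a))"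
  proof (rule Sum_any.cong)
    fix p :: "int \<times> int \<times> nat"
    obtain a b j where p: "p = (a,b,j)" by (cases p) auto
    have "Sum_any (\<lambda>q. (\<lambda>(c,e,i). B c e * C (k + int j - a + int i - c) (m + int j - b + int i - e) * wt e i (k + int j - a + int i - c)) q
          * (A a b * wt b j (k + int j - a)))
      = psd_mult B C (k + int j - a) (m + int j - b) * (A a b * wt b j (k + int j - a))"
      unfolding psd_mult_alt[of B C "k + int j - a" "m + int j - b"] by (rule Sum_any_left_distrib[OF fin_summand[OF Bb Cb], symmetric])
    moreover have "Sum_any (GR p) = Sum_any (\<lambda>q. (\<lambda>(c,e,i). B c e * C (k + int j - a + int i - c) (m + int j - b + int i - e) * wt e i (k + int j - a + int i - c)) q
          * (A a b * wt b j (k + int j - a)))"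
      by (rule Sum_any.cong) (auto simp: GR_def p split: prod.splits)
    ultimately show "Sum_any (GR p) = (\<lambda>(a,b,j). A a b * psd_mult B C (k + int j - a) (m + int j - b) * wt b j (k + int j - a)) p"
      by (simp add: p mult_ac)
  qed
  also have "\<dots> = psd_mult A (psd_mult B C) k m"
    unfolding psd_mult_alt[of A "psd_mult B C" k m] ..
  finally show ?thesis .
qed

lemma tr_tr[simp]: "tr (tr X) = X" by (simp add: tr_def fun_eq_iff)

lemma bnd_tr: "bnd X K M \<Longrightarrow> bnd (tr X) M K"
  unfolding bnd_def tr_def by blast

theorem lemma2p1:
  fixes C :: "int \<Rightarrow> int \<Rightarrow> complex" and K M :: int
  assumes "\<forall>k m. (k > K \<or> m > M) \<longrightarrow> C k m = 0"
    and "C K M \<noteq> 0"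
  shows "psd_invertible C"
proof -
  have Cb: "bnd C K M" using assms(1) by (simp add: bnd_def)
  obtain E where E: "psd E" "psd_mult C E = psd_one" using right_inv[OF Cb assms(2)] by blast
  have "tr C M K \<noteq> 0" using assms(2) by (simp add: tr_def)
  then obtain E' where E': "psd E'" "psd_mult (tr C) E' = psd_one" using right_inv[OF bnd_tr[OF Cb]] by blast
  define F where "F = tr E'"
  obtain K1 M1 where E'b: "bnd E' K1 M1" using psd_bnd[OF E'(1)] by blast
  have Fb: "bnd F M1 K1" unfolding F_def by (rule bnd_tr[OF E'b])
  obtain K2 M2 where Eb: "bnd E K2 M2" using psd_bnd[OF E(1)] by blast
  have FC: "psd_mult F C = psd_one"
  proof (intro ext)
    fix k m
    have "psd_mult F C k m = psd_mult (tr C) (tr F) m k" by (rule transp)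
    also have "\<dots> = psd_one m k" by (simp add: F_def E'(2))
    finally show "psd_mult F C k m = psd_one k m" by (simp add: psd_one_def conj_commute)
  qed
  have "F = psd_mult F (psd_mult C E)" by (simp add: E(2) mult_one_right)
  also have "\<dots> = psd_mult (psd_mult F C) E" by (intro ext assoc[OF Fb Cb Eb, symmetric])
  also have "\<dots> = E" by (simp add: FC mult_one_left)
  finally have "F = E" .
  then show ?thesis unfolding psd_invertible_def using E FC by blast
qed

end
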